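(* Let $A\in\mathbb{R}^{n\times n}$ and $B\in\mathbb{R}^{n\times m}$ be (unknown) matrices defining the discrete-time system $x^+=Ax+Bu$. Let $\mathrm{S}\in\mathbb{R}^{n_s\times n}$ be such that $\mathcal{S}:=\{x\in\mathbb{R}^n:\mathrm{S}x\le \mathbf{1}\}$ is a C-set, and let $\mathrm{U}\in\mathbb{R}^{n_u\times m}$ be such that $\mathcal{U}:=\{u\in\mathbb{R}^m:\mathrm{U}u\le\mathbf{1}\}$ (a polyhedral convex set containing the origin in its interior). Fix $\lambda\in[0,1)$. Let $u_d(0),\dots,u_d(T-1)\in\mathbb{R}^m$ be an input sequence applied to the system and $x_d(0),\dots,x_d(T)\in\mathbb{R}^n$ the corresponding state sequence, i.e. $x_d(k+1)=Ax_d(k)+Bu_d(k)$ for $k=0,\dots,T-1$, and set $U_{0,T}:=[u_d(0)\ \cdots\ u_d(T-1)]$, $X_{0,T}:=[x_d(0)\ \cdots\ x_d(T-1)]$, $X_{1,T}:=[x_d(1)\ \cdots\ x_d(T)]$. If there exist matrices $G_K\in\mathbb{R}^{T\times n}$ and $P\in\mathbb{R}^{n_s\times n_s}$ with $P\ge 0$ (entrywise) such that $P\mathbf{1}\le\lambda\mathbf{1}$, $\;P\mathrm{S}=\mathrm{S}X_{1,T}G_K$, $\;\mathrm{U}U_{0,T}G_K s\le\mathbf{1}$ for all vertices $s$ of $\mathcal{S}$, and $I_n=X_{0,T}G_K$, then the state-feedback gain $K=U_{0,T}G_K$ is such that $\mathcal{S}$ is $\lambda$-contractive for the closed-loop system $x^+=(A+BK)x$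 and $\mathcal{S}$ is admissible for $\mathcal{U}$ (i.e. $Kx\in\mathcal{U}$ for all $x\in\mathcal{S}$).
   Context: $\mathbf{1}$ denotes the vector of all ones of appropriate dimension; inequalities between vectors/matrices are entrywise. A C-set is a convex compact subset of $\mathbb{R}^n$ containing the origin as an interior point. For $\mu\ge0$, $\mu\mathcal{S}:=\{\mu x:x\in\mathcal{S}\}$. A C-set $\mathcal{S}$ is $\lambda$-contractive for $x^+=Fx$ (with $\lambda\in[0,1)$) if for each $x\in\mathcal{S}$, $\inf\{\lambda'\ge0: Fx\in\lambda'\mathcal{S}\}\le\lambda$. $\mathcal{S}$ is admissible for $\mathcal{U}$ (with gain $K$) if $Kx\in\mathcal{U}$ for every $x\in\mathcal{S}$. *)

theory Defs
  imports "HOL-Analysis.Analysis"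
begin

definition ones :: "real ^ 'a" where "ones = (\<chi> i. 1)"

definition vle :: "real ^ 'a \<Rightarrow> real ^ 'a \<Rightarrow> bool" where
  "vle x y \<longleftrightarrow> (\<forall>i. x $ i \<le> y $ i)"

definition polyset :: "real ^ 'n ^ 'k \<Rightarrow> (real ^ 'n) set" where
  "polyset M = {x. vle (M *v x) ones}"

definition C_set :: "(real ^ 'n) set \<Rightarrow> bool" where
  "C_set S \<longleftrightarrow> convex S \<and> compact S \<and> 0 \<in> interior S"

definition contractive :: "real \<Rightarrow> (real ^ 'n) set \<Rightarrow> real ^ 'n ^ 'n \<Rightarrow> bool" where
  "contractive lam S F \<longleftrightarrow>
     (\<forall>x\<in>S. Inf {l. l \<ge> 0 \<and> F *v x \<in> (\<lambda>y. l *\<^sub>R y) ` S} \<le> lam)"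

definition admissible :: "(real ^ 'n) set \<Rightarrow> (real ^ 'm) set \<Rightarrow> real ^ 'n ^ 'm \<Rightarrow> bool" where
  "admissible S U K \<longleftrightarrow> (\<forall>x\<in>S. K *v x \<in> U)"

text \<open>Product of the data matrix [c 0 ... c (T-1)] (columns c k) with the T-row matrix
  whose k-th row is g k.\<close>
definition data_mult :: "(nat \<Rightarrow> real ^ 'a) \<Rightarrow> nat \<Rightarrow> (nat \<Rightarrow> real ^ 'b) \<Rightarrow> real ^ 'b ^ 'a" where
  "data_mult c T g = (\<chi> i j. \<Sum>k<T. c k $ i * g k $ j)"

end

theory Submission
  imports Defs
begin

lemma mv_comp: "(M *v x) $ i = (\<Sum>j\<in>UNIV. M $ i $ j * x $ j)"
  by (simp add: matrix_vector_mult_def)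

lemma data_lin:
  fixes A :: "real ^ 'n ^ 'n" and B :: "real ^ 'm ^ 'n"
  assumes dyn: "\<And>k. k < T \<Longrightarrow> xd (Suc k) = A *v xd k + B *v ud k"
  shows "data_mult (\<lambda>k. xd (Suc k)) T G = A ** data_mult xd T G + B ** data_mult ud T G"
proof -
  have "\<And>i j. (\<Sum>k<T. xd (Suc k) $ i * G k $ j) =
     (\<Sum>l\<in>UNIV. A $ i $ l * (\<Sum>k<T. xd k $ l * G k $ j)) +
     (\<Sum>l\<in>UNIV. B $ i $ l * (\<Sum>k<T. ud k $ l * G k $ j))"
  proof -
    fix i j
    have "(\<Sum>k<T. xd (Suc k) $ i * G k $ j) = (\<Sum>k<T. ((\<Sum>l\<in>UNIV. A $ i $ l * xd k $ l) + (\<Sum>l\<in>UNIV. B $ i $ l * ud k $ l)) * G k $ j)"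
      by (rule sum.cong) (simp_all add: dyn mv_comp)
    also have "\<dots> = (\<Sum>k<T. \<Sum>l\<in>UNIV. A $ i $ l * (xd k $ l * G k $ j)) + (\<Sum>k<T. \<Sum>l\<in>UNIV. B $ i $ l * (ud k $ l * G k $ j))"
      by (simp add: distrib_right sum.distrib sum_distrib_right mult.assoc)
    also have "\<dots> = (\<Sum>l\<in>UNIV. A $ i $ l * (\<Sum>k<T. xd k $ l * G k $ j)) +
     (\<Sum>l\<in>UNIV. B $ i $ l * (\<Sum>k<T. ud k $ l * G k $ j))"
      by (simp add: sum_distrib_left sum.swap[of _ "{..<T}"])
    finally show "?thesis i j" .
  qed
  then show ?thesis
    by (simp add: vec_eq_iff data_mult_def matrix_matrix_mult_def)
qed

lemma convex_polyset: "convex (polyset M)"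
  unfolding convex_def polyset_def vle_def
proof (clarsimp)
  fix x y :: "real ^ 'a" and u v :: real and i
  assume x: "\<forall>i. (M *v x) $ i \<le> ones $ i" and y: "\<forall>i. (M *v y) $ i \<le> ones $ i"
    and u: "0 \<le> u" and v: "0 \<le> v" and uv: "u + v = 1"
  have "(M *v (u *\<^sub>R x + v *\<^sub>R y)) $ i = u * (M *v x) $ i + v * (M *v y) $ i"
    by (simp add: matrix_vector_right_distrib matrix_vector_mult_scaleR)
  also have "\<dots> \<le> u * 1 + v * 1"
    using x y u v by (intro add_mono mult_left_mono) (auto simp: ones_def)
  finally show "(M *v (u *\<^sub>R x + v *\<^sub>R y)) $ i \<le> ones $ i" using uv by (simp add: ones_def)
qed

theorem theorem1:
  fixes A :: "real ^ 'n ^ 'n" and B :: "real ^ 'm ^ 'n"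
    and Sm :: "real ^ 'n ^ 'ns" and Um :: "real ^ 'm ^ 'nu"
    and lam :: real and T :: nat
    and xd :: "nat \<Rightarrow> real ^ 'n" and ud :: "nat \<Rightarrow> real ^ 'm"
    and GK :: "nat \<Rightarrow> real ^ 'n" and P :: "real ^ 'ns ^ 'ns"
  assumes Cset: "C_set (polyset Sm)"
    and lam: "0 \<le> lam" "lam < 1"
    and dyn: "\<And>k. k < T \<Longrightarrow> xd (Suc k) = A *v xd k + B *v ud k"
    and Pnn: "\<And>i j. 0 \<le> P $ i $ j"
    and P1: "vle (P *v ones) (lam *\<^sub>R ones)"
    and PS: "P ** Sm = Sm ** data_mult (\<lambda>k. xd (Suc k)) T GK"
    and Uv: "\<And>s. s extreme_point_of (polyset Sm) \<Longrightarrow>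
               vle (Um *v (data_mult ud T GK *v s)) ones"
    and Id: "mat 1 = data_mult xd T GK"
  shows "contractive lam (polyset Sm) (A + B ** data_mult ud T GK)
         \<and> admissible (polyset Sm) (polyset Um) (data_mult ud T GK)"
proof
  define K where "K = data_mult ud T GK"
  define F where "F = A + B ** K"
  have X1: "data_mult (\<lambda>k. xd (Suc k)) T GK = F"
    using data_lin[where xd=xd and ud=ud and A=A and B=B and T=T and G=GK, OF dyn] Id[symmetric] by (simp add: F_def K_def)
  have SF: "Sm ** F = P ** Sm" using PS X1 by simp
  show "contractive lam (polyset Sm) (A + B ** data_mult ud T GK)"
    unfolding contractive_def F_def[symmetric] K_def[symmetric]
  proof
    fix x assume x: "x \<in> polyset Sm"
    let ?X = "{l. l \<ge> 0 \<and> F *v x \<in> (\<lambda>y. l *\<^sub>R y) ` polyset Sm}"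
    have SFx: "(Sm *v (F *v x)) $ i \<le> lam" for i
    proof -
      have "(Sm *v (F *v x)) $ i = (P *v (Sm *v x)) $ i"
        by (simp add: matrix_vector_mul_assoc SF)
      also have "\<dots> \<le> (P *v ones) $ i"
        unfolding mv_comp[of P]
        using x Pnn by (intro sum_mono mult_left_mono) (auto simp: polyset_def vle_def)
      also have "\<dots> \<le> lam" using P1 by (simp add: vle_def ones_def)
      finally show ?thesis .
    qed
    have mem: "y \<in> ?X" if y: "y > lam" for y
    proof -
      have "y > 0" using y lam by simp
      have "(1/y) *\<^sub>R (F *v x) \<in> polyset Sm"
        unfolding polyset_def vle_def
      proof (clarsimp simp: matrix_vector_mult_scaleR ones_def)
        fix i
        have "(Sm *v (F *v x)) $ i \<le> y" using SFx[of i] y by simp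
        then show "(Sm *v (F *v x)) $ i / y \<le> 1" using \<open>y > 0\<close> by simp
      qed
      moreover have "F *v x = y *\<^sub>R ((1/y) *\<^sub>R (F *v x))" using \<open>y > 0\<close> by simp
      ultimately have "F *v x \<in> (\<lambda>z. y *\<^sub>R z) ` polyset Sm" by (metis image_eqI)
      then show ?thesis using \<open>y > 0\<close> by simp
    qed
    have bdd: "bdd_below ?X" by (rule bdd_belowI[of _ 0]) auto
    show "Inf ?X \<le> lam"
    proof (rule dense_ge)
      fix y assume "lam < y"
      then show "Inf ?X \<le> y" using mem bdd by (intro cInf_lower) auto
    qed
  qed
  show "admissible (polyset Sm) (polyset Um) (data_mult ud T GK)"
    unfolding admissible_def K_def[symmetric]
  proof
    fix x assume x: "x \<in> polyset Sm"
    have cc: "compact (polyset Sm)" "convex (polyset Sm)" using Cset by (auto simp: C_set_def)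
    let ?Q = "{x. K *v x \<in> polyset Um}"
    have "?Q = polyset (Um ** K)"
      by (simp add: polyset_def matrix_vector_mul_assoc)
    then have cQ: "convex ?Q" using convex_polyset by metis
    have "{x. x extreme_point_of (polyset Sm)} \<subseteq> ?Q"
      using Uv by (auto simp: polyset_def K_def)
    then have "convex hull {x. x extreme_point_of (polyset Sm)} \<subseteq> ?Q"
      using cQ by (simp add: hull_minimal)
    then show "K *v x \<in> polyset Um"
      using x Krein_Milman_Minkowski[OF cc] by auto
  qed
qed

end
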